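(* In the setting below, the vector $$\begin{aligned}U=&\tfrac16\big[(-\lambda_1+\lambda_6)(-1)^3+(\lambda_3-\lambda_5)(-1)^3+(\lambda_1-\lambda_3+\lambda_5-\lambda_6)(-1)^3\big]\otimes e^0\\&+\tfrac12(\lambda_3-\lambda_5)(-1)\otimes\big(e^{\alpha_1-\alpha_6}+e^{-\alpha_1+\alpha_6}\big)+\tfrac12(-\lambda_1+\lambda_6)(-1)\otimes\big(e^{\alpha_3-\alpha_5}+e^{-\alpha_3+\alpha_5}\big)\\&+\tfrac12(-\lambda_1+\lambda_3-\lambda_5+\lambda_6)(-1)\otimes\big(e^{\alpha_1+\alpha_3-\alpha_5-\alpha_6}+e^{-\alpha_1-\alpha_3+\alpha_5+\alpha_6}\big)\in V^{\Lambda_0}\end{aligned}$$ is nonzero and is a highest weight vector of type $Vir(\tfrac45,3)\otimes W^{\Omega_0}$, i.e. it satisfies (HW1)–(HW5) with $h=3$ and $\omega_j=0$.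
   Context: Setting. $Q$ is the $E_6$ root lattice with simple roots $\alpha_1,\dots,\alpha_6$ (Dynkin chain $\alpha_1-\alpha_3-\alpha_4-\alpha_5-\alpha_6$, $\alpha_2$ attached to $\alpha_4$), form from the Cartan matrix, fundamental weights $\lambda_i$, $P=\bigoplus\mathbb Z\lambda_i$, $\mathfrak h=\mathbb C\otimes P$. $\varepsilon$ bimultiplicative on $P$ with $[\varepsilon(\lambda_i,\lambda_j)]$ rows $(1,1,1,1,1,1)$, $(-1,1,1,1,1,-1)$, $(-1,1,1,1,1,1)$, $(1,-1,1,1,1,1)$, $(1,1,1,1,1,-1)$, $(1,1,1,1,1,1)$. $V_P=S(\hat{\mathfrak h}^-)\otimes\mathbb C[P]$ with Heisenberg operators $h(n)$ ($[h(m),h'(n)]=m\langle h,h'\rangle\delta_{m+n,0}$, $h(n)1=0$ for $n>0$, $h(0)(u\otimes e^\beta)=\langle h,\beta\rangle u\otimes e^\beta$). For $\alpha\in Q$: $Y(1\otimes e^\alpha,z)=\exp(\sum_{k\ge1}\frac{\alpha(-k)}kz^k)\exp(-\sum_{k\ge1}\frac{\alpha(k)}kz^{-k})e_\alpha z^{\alpha(0)}=\sum_n\{1\otimes e^\alpha\}_nz^{-n-1}$, $e_\alpha(u\otimes e^\beta)=\varepsilon(\alpha,\beta)u\otimes e^{\alpha+\beta}$, $z^{\alpha(0)}(u\otimes e^\beta)=z^{\langle\alpha,\beta\rangle}u\otimes e^\beta$; for general vectors $Y(h_1(-n_1-1)\cdots h_k(-n_k-1)\otimes e^\alpha,z)=\,:h_1^{(n_1)}(z)\cdots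 h_k^{(n_k)}(z)Y(1\otimes e^\alpha,z):$, $h^{(n)}(z)=\frac1{n!}(\frac d{dz})^n\sum_mh(m)z^{-m-1}$, annihilators to the right. $V^{\Lambda_0}=S(\hat{\mathfrak h}^-)\otimes\mathbb C[Q]$. $\tau$: $\alpha_1\leftrightarrow\alpha_6$, $\alpha_3\leftrightarrow\alpha_5$; $\mathrm{Proj}(\nu)=(\nu+\tau\nu)/2$. $\theta=\alpha_1+2\alpha_2+2\alpha_3+3\alpha_4+2\alpha_5+\alpha_6$. Raising operators of $\tilde{\mathfrak a}$ ($F_4^{(1)}$): $\{\beta_1\}_0=\{1\otimes e^{\alpha_2}\}_0$, $\{\beta_2\}_0=\{1\otimes e^{\alpha_4}\}_0$, $\{\beta_3\}_0=\{1\otimes e^{\alpha_3}\}_0+\{1\otimes e^{\alpha_5}\}_0$, $\{\beta_4\}_0=\{1\otimes e^{\alpha_1}\}_0+\{1\otimes e^{\alpha_6}\}_0$, $\{1\otimes e^{-\theta}\}_1$. Coset conformal vector $\omega=\frac1{10}[(-\lambda_1+\lambda_6)(-1)^2+(\lambda_3-\lambda_5)(-1)^2+(\lambda_1-\lambda_3+\lambda_5-\lambda_6)(-1)^2]\otimes e^0+\frac15(-1\otimes e^{\pm\gamma_1}-1\otimes e^{\pm\gamma_2}+1\otimes e^{\pm\gamma_3})$, $\gamma_1=\alpha_1-\alpha_6$, $\gamma_2=\alpha_3-\alpha_5$, $\gamma_3=\gamma_1+\gamma_2$, $1\otimes e^{\pm\gamma}:=1\otimes e^\gamma+1\otimes e^{-\gamma}$;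 $L(n)=\{\omega\}_{n+1}$ (Virasoro, $c=4/5$, commuting with $\tilde{\mathfrak a}$). $\Omega_0$ is the basic level one $F_4^{(1)}$ weight, $W^{\Omega_0}$ its irreducible module. A nonzero $v$ is a highest weight vector of type $Vir(\frac45,h)\otimes W^{\Omega_j}$ if (HW1) $\{1\otimes e^{-\theta}\}_1v=0$; (HW2) $\{\beta_i\}_0v=0$, $i=1,\dots,4$; (HW3) $L(1)v=L(2)v=0$; (HW4) $L(0)v=hv$; (HW5) $v\in\bigoplus_kS(\hat{\mathfrak h}^-)\otimes e^{\nu_k}$ with $\mathrm{Proj}(\nu_k)=\omega_j$ ($\omega_0=0$). In the paper $U$ is constructed as $\{R\}_{-8/3}\cdot\tau R-\frac52\{\omega\}_{-2}(1\otimes e^0)$, with $\{R\}_n$ the modes of an intertwining operator for $R=1\otimes e^{-\lambda_1+\lambda_6}+1\otimes e^{\lambda_3-\lambda_5}-1\otimes e^{\lambda_1-\lambda_3+\lambda_5-\lambda_6}$; the explicit expression above is that vector. *)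

theory Defs
  imports Complex_Main "HOL-Library.Multiset" "HOL-Library.Function_Algebras"
begin

text \<open>L1..L6 index the simple roots alpha_1..alpha_6 and fundamental weights
  lambda_1..lambda_6 (Bourbaki numbering: chain 1-3-4-5-6, node 2 attached to 4).\<close>

datatype ix = L1 | L2 | L3 | L4 | L5 | L6

lemma UNIV_ix: "(UNIV :: ix set) = {L1, L2, L3, L4, L5, L6}"
  by (auto intro: ix.exhaust)

instance ix :: finite
  by standard (simp add: UNIV_ix)

fun ixn :: "ix \<Rightarrow> nat" where
  "ixn L1 = 0" | "ixn L2 = 1" | "ixn L3 = 2" | "ixn L4 = 3" | "ixn L5 = 4" | "ixn L6 = 5"

definition adj :: "ix \<Rightarrow> ix \<Rightarrow> bool" where
  "adj i j \<longleftrightarrow> {i, j} \<in> {{L1, L3}, {L3, L4}, {L4, L5}, {L5, L6}, {L2, L4}}"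

definition cartan :: "ix \<Rightarrow> ix \<Rightarrow> int" where
  "cartan i j = (if i = j then 2 else if adj i j then -1 else 0)"

text \<open>Elements of P are written in the basis of fundamental weights:
  nu = sum_i nu(i) lambda_i.\<close>
type_synonym lat = "ix \<Rightarrow> int"

text \<open>Elements of h = C (x) P in the basis of fundamental weights.\<close>
type_synonym hvec = "ix \<Rightarrow> complex"

text \<open>Gram matrix <lambda_i, lambda_j> of the form (= inverse of the Cartan matrix;
  see lemma ginv_cartan below, which shows <lambda_i, alpha_j> = delta_ij).\<close>
definition ginv :: "ix \<Rightarrow> ix \<Rightarrow> rat" where
  "ginv i j = of_int ([[4,3,5,6,4,2],[3,6,6,9,6,3],[5,6,10,12,8,4],
                      [6,9,12,18,12,6],[4,6,8,12,10,5],[2,3,4,6,5,4]] ! ixn i ! ixn j) / 3"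

lemma ginv_cartan:
  "(\<Sum>k\<in>UNIV. ginv i k * of_int (cartan k j)) = (if i = j then 1 else 0)"
  by (cases i; cases j) (simp_all add: UNIV_ix ginv_def cartan_def adj_def doubleton_eq_iff)

definition alpha :: "ix \<Rightarrow> lat" where
  "alpha j = (\<lambda>i. cartan j i)"

definition rootlat :: "lat set" where
  "rootlat = {nu. \<exists>c :: ix \<Rightarrow> int. nu = (\<lambda>i. \<Sum>j\<in>UNIV. c j * alpha j i)}"

definition hofl :: "lat \<Rightarrow> hvec" where
  "hofl nu = (\<lambda>i. of_int (nu i))"

definition lam :: "ix \<Rightarrow> lat" where
  "lam i = (\<lambda>j. if j = i then 1 else 0)"

definition ip :: "hvec \<Rightarrow> hvec \<Rightarrow> complex" where
  "ip x y = (\<Sum>i\<in>UNIV. \<Sum>j\<in>UNIV. x i * y j * of_rat (ginv i j))"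

definition lip :: "lat \<Rightarrow> lat \<Rightarrow> rat" where
  "lip x y = (\<Sum>i\<in>UNIV. \<Sum>j\<in>UNIV. of_int (x i * y j) * ginv i j)"

definition epsmat :: "ix \<Rightarrow> ix \<Rightarrow> complex" where
  "epsmat i j = of_int ([[1,1,1,1,1,1],[-1,1,1,1,1,-1],[-1,1,1,1,1,1],
                        [1,-1,1,1,1,1],[1,1,1,1,1,-1],[1,1,1,1,1,1]] ! ixn i ! ixn j)"

definition eps :: "lat \<Rightarrow> lat \<Rightarrow> complex" where
  "eps mu nu = (\<Prod>i\<in>UNIV. \<Prod>j\<in>UNIV. epsmat i j powi (mu i * nu j))"

text \<open>A monomial in S(h^-) is a multiset of pairs (i,k) standing for lambda_i(-k-1).
  A basis vector of V_P is (M, beta) = M (x) e^beta.  A vector is a finitely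
  supported complex-valued function on basis vectors.\<close>
type_synonym mon = "(ix \<times> nat) multiset"
type_synonym basis = "mon \<times> lat"
type_synonym vec = "basis \<Rightarrow> complex"

definition bv :: "basis \<Rightarrow> vec" where
  "bv b = (\<lambda>b'. if b' = b then 1 else 0)"

definition smul :: "complex \<Rightarrow> vec \<Rightarrow> vec" where
  "smul c v = (\<lambda>b. c * v b)"

definition lext :: "(basis \<Rightarrow> vec) \<Rightarrow> vec \<Rightarrow> vec" where
  "lext f v = (\<lambda>b'. \<Sum>b\<in>{b. v b \<noteq> 0}. v b * f b b')"

text \<open>Heisenberg operators h(-n) (n >= 1): multiplication by h(-n).\<close>
definition cr :: "hvec \<Rightarrow> nat \<Rightarrow> vec \<Rightarrow> vec" where
  "cr h n = lext (\<lambda>(M, beta). \<Sum>i\<in>UNIV. smul (h i) (bv (M + {#(i, n - 1)#}, beta)))"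

text \<open>Heisenberg operators h(n) (n >= 1): the derivation with
  [h(n), lambda_i(-n)] = n <h, lambda_i>, killing 1.\<close>
definition an :: "hvec \<Rightarrow> nat \<Rightarrow> vec \<Rightarrow> vec" where
  "an h n = lext (\<lambda>(M, beta). \<Sum>i\<in>UNIV.
      smul (of_nat n * ip h (hofl (lam i)) * of_nat (count M (i, n - 1)))
           (bv (M - {#(i, n - 1)#}, beta)))"

definition zm :: "hvec \<Rightarrow> vec \<Rightarrow> vec" where
  "zm h = lext (\<lambda>(M, beta). smul (ip h (hofl beta)) (bv (M, beta)))"

definition hm :: "hvec \<Rightarrow> int \<Rightarrow> vec \<Rightarrow> vec" where
  "hm h m = (if m < 0 then cr h (nat (- m)) else if m = 0 then zm h else an h (nat m))"

text \<open>Degree (L(0)-weight of the Heisenberg part) of a monomial.\<close>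
definition wt :: "mon \<Rightarrow> nat" where
  "wt M = (\<Sum>x\<in>#M. snd x + 1)"

text \<open>Coefficient of w^b in exp(sum_{k>=1} x_k w^k / k), written out literally:
  sum over n of 1/n! times the sum over ordered compositions (k_1,...,k_n) of b of
  (x_{k_1}/k_1) ... (x_{k_n}/k_n).\<close>
definition comps :: "nat \<Rightarrow> nat list set" where
  "comps b = {ks. sum_list ks = b \<and> 0 \<notin> set ks}"

definition expco :: "(nat \<Rightarrow> vec \<Rightarrow> vec) \<Rightarrow> nat \<Rightarrow> vec \<Rightarrow> vec" where
  "expco x b v = (\<Sum>ks\<in>comps b. smul (1 / of_nat (fact (length ks)))
       (foldr (\<lambda>k f. (\<lambda>w. smul (1 / of_nat k) (x k w)) \<circ> f) ks id v))"

text \<open>Modes {1 (x) e^alpha}_n of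
  Y(1 (x) e^alpha, z) = exp(sum alpha(-k) z^k / k) exp(-sum alpha(k) z^-k / k) e_alpha z^alpha(0).
  On M (x) e^beta the z-power is z^(b - a + <alpha,beta>) for the coefficient of z^b of the
  first exponential and of z^-a of the second; the second one vanishes on M for a > wt M.
  (For alpha in Q, <alpha, beta> is an integer.)\<close>
definition emode :: "lat \<Rightarrow> int \<Rightarrow> vec \<Rightarrow> vec" where
  "emode a n = lext (\<lambda>(M, beta).
     smul (eps a beta)
       (\<Sum>aa\<in>{0..wt M}.
          (let bb = int aa - n - 1 - \<lfloor>lip a beta\<rfloor> in
           if bb \<ge> 0 then
             expco (\<lambda>k. cr (hofl a) k) (nat bb)
               (expco (\<lambda>k w. smul (-1) (an (hofl a) k w)) aa (bv (M, a + beta)))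
           else 0)))"

text \<open>Modes of Y(h(-1)^2 (x) e^0, z) = :h(z) h(z): , i.e.
  {h(-1)^2 (x) e^0}_m = sum_{j+k=m-1} :h(j) h(k): (annihilators to the right);
  on M (x) e^beta only j in [m-1-wt M, wt M] contribute.\<close>
definition sqmode :: "hvec \<Rightarrow> int \<Rightarrow> vec \<Rightarrow> vec" where
  "sqmode h m = lext (\<lambda>(M, beta).
     (\<Sum>j\<in>{m - 1 - int (wt M) .. int (wt M)}.
        (let k = m - 1 - j in
         if 0 < j \<and> k < 0 then hm h k (hm h j (bv (M, beta)))
         else hm h j (hm h k (bv (M, beta))))))"

definition h1 :: hvec where "h1 = hofl (lam L6 - lam L1)"
definition h2 :: hvec where "h2 = hofl (lam L3 - lam L5)"
definition h3 :: hvec where "h3 = hofl (lam L1 - lam L3 + lam L5 - lam L6)"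

definition gamma1 :: lat where "gamma1 = alpha L1 - alpha L6"
definition gamma2 :: lat where "gamma2 = alpha L3 - alpha L5"
definition gamma3 :: lat where "gamma3 = gamma1 + gamma2"

text \<open>{omega}_n, by linearity of Y in the vector omega.\<close>
definition omode :: "int \<Rightarrow> vec \<Rightarrow> vec" where
  "omode n v =
     smul (1/10) (sqmode h1 n v + sqmode h2 n v + sqmode h3 n v)
   + smul (1/5) (- (emode gamma1 n v + emode (- gamma1) n v)
                 - (emode gamma2 n v + emode (- gamma2) n v)
                 + (emode gamma3 n v + emode (- gamma3) n v))"

definition Lvir :: "int \<Rightarrow> vec \<Rightarrow> vec" where
  "Lvir n = omode (n + 1)"

definition theta :: lat where
  "theta = alpha L1 + 2 * alpha L2 + 2 * alpha L3 + 3 * alpha L4 + 2 * alpha L5 + alpha L6"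

definition beta1 :: "vec \<Rightarrow> vec" where "beta1 v = emode (alpha L2) 0 v"
definition beta2 :: "vec \<Rightarrow> vec" where "beta2 v = emode (alpha L4) 0 v"
definition beta3 :: "vec \<Rightarrow> vec" where "beta3 v = emode (alpha L3) 0 v + emode (alpha L5) 0 v"
definition beta4 :: "vec \<Rightarrow> vec" where "beta4 v = emode (alpha L1) 0 v + emode (alpha L6) 0 v"
definition lowtheta :: "vec \<Rightarrow> vec" where "lowtheta v = emode (- theta) 1 v"

fun tauix :: "ix \<Rightarrow> ix" where
  "tauix L1 = L6" | "tauix L6 = L1" | "tauix L3 = L5" | "tauix L5 = L3"
| "tauix L2 = L2" | "tauix L4 = L4"

definition tau :: "lat \<Rightarrow> lat" where "tau nu = (\<lambda>i. nu (tauix i))"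

definition Proj :: "lat \<Rightarrow> ix \<Rightarrow> rat" where
  "Proj nu = (\<lambda>i. (of_int (nu i) + of_int (tau nu i)) / 2)"

definition vac :: "lat \<Rightarrow> vec" where "vac nu = bv ({#}, nu)"

definition Uvec :: vec where
  "Uvec =
     smul (1/6) (cr h1 1 (cr h1 1 (cr h1 1 (vac 0)))
               + cr h2 1 (cr h2 1 (cr h2 1 (vac 0)))
               + cr h3 1 (cr h3 1 (cr h3 1 (vac 0))))
   + smul (1/2) (cr h2 1 (vac gamma1 + vac (- gamma1)))
   + smul (1/2) (cr h1 1 (vac gamma2 + vac (- gamma2)))
   + smul (1/2) (cr (hofl (lam L3 - lam L1 - lam L5 + lam L6)) 1 (vac gamma3 + vac (- gamma3)))"

end

theory Submission
  imports Defs "HOL-Library.Product_Lexorder"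
begin

instantiation ix :: linorder
begin
definition less_eq_ix_def: "x \<le> y \<longleftrightarrow> ixn x \<le> ixn y"
definition less_ix_def: "x < y \<longleftrightarrow> ixn x < ixn y"
instance
proof
  fix x y z :: ix
  show "(x < y) = (x \<le> y \<and> \<not> y \<le> x)" by (auto simp: less_eq_ix_def less_ix_def)
  show "x \<le> x" by (simp add: less_eq_ix_def)
  show "x \<le> y \<Longrightarrow> y \<le> z \<Longrightarrow> x \<le> z" by (simp add: less_eq_ix_def)
  show "x \<le> y \<Longrightarrow> y \<le> x \<Longrightarrow> x = y" by (cases x; cases y) (simp_all add: less_eq_ix_def)
  show "x \<le> y \<or> y \<le> x" by (auto simp: less_eq_ix_def)
qed
end


datatype lv = V int int int int int int

fun latof :: "lv \<Rightarrow> lat" where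
 "latof (V a b c d e f) = (\<lambda>i. case i of L1 \<Rightarrow> a | L2 \<Rightarrow> b | L3 \<Rightarrow> c | L4 \<Rightarrow> d | L5 \<Rightarrow> e | L6 \<Rightarrow> f)"

fun addV :: "lv \<Rightarrow> lv \<Rightarrow> lv" where
 "addV (V a b c d e f) (V a' b' c' d' e' f') = V (a+a') (b+b') (c+c') (d+d') (e+e') (f+f')"

lemma latof_add: "latof (addV x y) = latof x + latof y"
  by (cases x; cases y) (auto intro!: ext split: ix.split)

lemma latof_inj: "latof x = latof y \<Longrightarrow> x = y"
proof (cases x; cases y)
  fix a b c d e f a' b' c' d' e' f'
  assume h: "latof x = latof y" and x: "x = V a b c d e f" and y: "y = V a' b' c' d' e' f'"
  have "\<forall>i. latof x i = latof y i" using h by simp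
  then show "x = y" unfolding x y by (metis latof.simps ix.simps(31-36))
qed

definition ixs :: "ix list" where "ixs = [L1, L2, L3, L4, L5, L6]"

lemma sum_UNIV_ix: "(\<Sum>i\<in>UNIV. f i) = (\<Sum>i\<leftarrow>ixs. f i)"
  by (simp add: UNIV_ix ixs_def)
lemma prod_UNIV_ix: "(\<Prod>i\<in>UNIV. f i) = (\<Prod>i\<leftarrow>ixs. f i)"
  by (simp add: UNIV_ix ixs_def)

type_synonym key = "(ix \<times> nat) list \<times> lv"
type_synonym cf = "int \<times> int"
type_synonym vL = "(key \<times> cf) list"

definition cv :: "cf \<Rightarrow> complex" where "cv c = of_int (fst c) / of_int (snd c)"

definition cmul :: "cf \<Rightarrow> cf \<Rightarrow> cf" where "cmul x y = (fst x * fst y, snd x * snd y)"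

lemma cv_mul: "cv (cmul x y) = cv x * cv y" by (simp add: cv_def cmul_def)

definition cnorm :: "cf \<Rightarrow> cf" where
  "cnorm x = (let g = gcd (fst x) (snd x) in if g = 0 then x else (fst x div g, snd x div g))"

lemma cv_norm: "cv (cnorm x) = cv x"
proof (cases x)
  case (Pair p q)
  define g where "g = gcd p q"
  show ?thesis
  proof (cases "g = 0")
    case True then show ?thesis by (simp add: cnorm_def Pair g_def)
  next
    case False
    have p: "p = g * (p div g)" and q: "q = g * (q div g)" by (simp_all add: g_def)
    have "cv x = of_int (g * (p div g)) / of_int (g * (q div g))"
      using p q by (simp add: cv_def Pair)
    also have "\<dots> = of_int (p div g) / of_int (q div g)"
      using False by (simp add: mult_divide_mult_cancel_left)
    finally show ?thesis using False by (simp add: cnorm_def Pair g_def[symmetric] Let_def cv_def)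
  qed
qed

definition cadd :: "cf \<Rightarrow> cf \<Rightarrow> cf" where
  "cadd x y = cnorm (if snd x = 0 then y else if snd y = 0 then x
                     else (fst x * snd y + fst y * snd x, snd x * snd y))"

lemma cv_add: "cv (cadd x y) = cv x + cv y"
  unfolding cadd_def cv_norm by (auto simp: cv_def add_frac_eq)

lemma cv_zero: "fst c = 0 \<Longrightarrow> cv c = 0" by (simp add: cv_def)
lemma cv_one: "cv (1, 1) = 1" by (simp add: cv_def)

fun kb :: "key \<Rightarrow> basis" where "kb (M, l) = (mset M, latof l)"

lemma kb_inj: "kb k = kb k' \<longleftrightarrow> mset (fst k) = mset (fst k') \<and> snd k = snd k'"
  by (cases k; cases k') (auto dest: latof_inj)

definition vl :: "vL \<Rightarrow> vec" where
  "vl xs = sum_list (map (\<lambda>(k,c). smul (cv c) (bv (kb k))) xs)"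

lemma vl_Nil[simp]: "vl [] = 0" by (simp add: vl_def)
lemma vl_Cons: "vl ((k,c)#xs) = smul (cv c) (bv (kb k)) + vl xs" by (simp add: vl_def)
lemma vl_append: "vl (xs @ ys) = vl xs + vl ys" by (simp add: vl_def)
lemma vl_concat: "vl (concat xss) = sum_list (map vl xss)"
  by (induction xss) (simp_all add: vl_append)

lemma vl_apply: "vl xs b = (\<Sum>(k,c)\<leftarrow>xs. if kb k = b then cv c else 0)"
  unfolding vl_def
  by (induction xs) (auto simp: smul_def bv_def)

lemma vl_at_filter: "vl xs (kb k0) = (\<Sum>(k,c)\<leftarrow>filter (\<lambda>(k,c). mset (fst k) = mset (fst k0) \<and> snd k = snd k0) xs. cv c)"
  unfolding vl_apply kb_inj by (induction xs) (simp_all add: split_beta)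

lemma vl_at: "filter (\<lambda>(k,c). mset (fst k) = mset (fst k0) \<and> snd k = snd k0) xs = [(k1,c0)] \<Longrightarrow> vl xs (kb k0) = cv c0"
  unfolding vl_at_filter by simp

lemma vl_supp: "vl xs b \<noteq> 0 \<Longrightarrow> b \<in> kb ` fst ` set xs"
proof (induction xs)
  case Nil then show ?case by simp
next
  case (Cons x xs) then show ?case by (cases x) (auto simp: vl_apply split: if_splits)
qed

lemma vl_fin: "finite {b. vl xs b \<noteq> 0}"
  by (rule finite_subset[of _ "kb ` fst ` set xs"]) (auto dest: vl_supp)

definition scaleL :: "cf \<Rightarrow> vL \<Rightarrow> vL" where
  "scaleL r xs = map (\<lambda>(k,c). (k, cnorm (cmul r c))) xs"

lemma smul_add: "smul c (v + w) = smul c v + smul c w" by (simp add: smul_def fun_eq_iff algebra_simps)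
lemma smul_smul: "smul c (smul d v) = smul (c*d) v" by (simp add: smul_def mult.assoc)
lemma smul_zero[simp]: "smul c 0 = 0" unfolding smul_def by (rule ext) simp
lemma smul_zero'[simp]: "smul c (\<lambda>a. 0) = (\<lambda>a. 0)" unfolding smul_def by (rule ext) simp
lemma smul_sum_list: "smul c (sum_list vs) = sum_list (map (smul c) vs)"
proof (induction vs)
  case Nil then show ?case by simp
next
  case (Cons a vs)
  show ?case using Cons by (simp only: sum_list.Cons list.map smul_add)
qed

lemma vl_scale: "vl (scaleL r xs) = smul (cv r) (vl xs)"
  by (induction xs) (auto simp: scaleL_def vl_Cons smul_add smul_smul cv_norm cv_mul)

fun ins :: "key \<times> cf \<Rightarrow> vL \<Rightarrow> vL" where
  "ins x [] = [x]"
| "ins (k,c) ((k',c')#ys) = (if k = k' then (k, cadd c c')#ys else (k',c') # ins (k,c) ys)"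

lemma vl_ins: "vl (ins x ys) = vl (x#ys)"
proof (induction x ys rule: ins.induct)
  case (1 x) then show ?case by simp
next
  case (2 k c k' c' ys) then show ?case
    by (auto simp: vl_Cons smul_def fun_eq_iff cv_add algebra_simps)
qed

definition normL :: "vL \<Rightarrow> vL" where
  "normL xs = filter (\<lambda>(k,c). fst c \<noteq> 0) (foldr ins (filter (\<lambda>(k,c). fst c \<noteq> 0) xs) [])"

lemma vl_filter: "vl (filter (\<lambda>(k,c). fst c \<noteq> 0) xs) = vl xs"
  by (induction xs) (auto simp: vl_Cons smul_def fun_eq_iff cv_zero)

lemma vl_norm: "vl (normL xs) = vl xs"
proof -
  have "vl (foldr ins ys []) = vl ys" for ys
    by (induction ys) (auto simp: vl_ins vl_Cons)
  then show ?thesis by (simp add: normL_def vl_filter)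
qed

lemma lext_T: assumes "finite T" "{b. v b \<noteq> 0} \<subseteq> T"
  shows "lext f v b' = (\<Sum>b\<in>T. v b * f b b')"
  unfolding lext_def
  by (rule sum.mono_neutral_left) (use assms in \<open>auto intro: finite_subset\<close>)

lemma fin_add: "finite {b. v b \<noteq> (0::complex)} \<Longrightarrow> finite {b. w b \<noteq> 0} \<Longrightarrow> finite {b. (v + w) b \<noteq> 0}"
  by (rule finite_subset[of _ "{b. v b \<noteq> 0} \<union> {b. w b \<noteq> 0}"]) auto

lemma lext_add: assumes "finite {b. v b \<noteq> 0}" "finite {b. w b \<noteq> 0}"
  shows "lext f (v + w) = lext f v + lext f w"
proof (rule ext)
  fix b'
  define T where "T = {b. v b \<noteq> 0} \<union> {b. w b \<noteq> 0}"
  have fT: "finite T" using assms by (simp add: T_def)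
  have "lext f (v + w) b' = (\<Sum>b\<in>T. (v+w) b * f b b')" by (rule lext_T[OF fT]) (auto simp: T_def)
  moreover have "lext f v b' = (\<Sum>b\<in>T. v b * f b b')" by (rule lext_T[OF fT]) (auto simp: T_def)
  moreover have "lext f w b' = (\<Sum>b\<in>T. w b * f b b')" by (rule lext_T[OF fT]) (auto simp: T_def)
  ultimately show "lext f (v + w) b' = (lext f v + lext f w) b'"
    by (simp add: algebra_simps sum.distrib)
qed

lemma lext_single: "lext f (smul c (bv b)) = smul c (f b)"
proof (rule ext)
  fix b'
  have "lext f (smul c (bv b)) b' = (\<Sum>x\<in>{b}. smul c (bv b) x * f x b')"
    by (rule lext_T) (auto simp: smul_def bv_def)
  then show "lext f (smul c (bv b)) b' = smul c (f b) b'" by (simp add: smul_def bv_def)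
qed

lemma lext_zero: "lext f 0 = 0" unfolding lext_def by (rule ext) simp

lemma lext_zero'[simp]: "lext f (\<lambda>a. 0) = (\<lambda>a. 0)" unfolding lext_def by (rule ext) simp
lemma lext_vl: "lext f (vl xs) = sum_list (map (\<lambda>(k,c). smul (cv c) (f (kb k))) xs)"
proof (induction xs)
  case Nil then show ?case by (simp add: lext_zero)
next
  case (Cons x xs)
  obtain k c where x: "x = (k,c)" by (cases x) blast
  have f1: "finite {b. smul (cv c) (bv (kb k)) b \<noteq> 0}"
    by (rule finite_subset[of _ "{kb k}"]) (auto simp: smul_def bv_def)
  show ?case unfolding x vl_Cons lext_add[OF f1 vl_fin] lext_single Cons by simp
qed


definition bindL :: "(key \<Rightarrow> vL) \<Rightarrow> vL \<Rightarrow> vL" where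
  "bindL g xs = normL (concat (map (\<lambda>(k,c). scaleL c (g k)) xs))"

lemma vl_bind:
  assumes "\<And>M l. f (mset M, latof l) = vl (g (M, l))"
  shows "lext f (vl xs) = vl (bindL g xs)"
proof -
  have "lext f (vl xs) = sum_list (map (\<lambda>(k,c). smul (cv c) (f (kb k))) xs)" by (rule lext_vl)
  also have "\<dots> = sum_list (map (\<lambda>(k,c). vl (scaleL c (g k))) xs)"
    by (rule arg_cong[where f=sum_list], rule map_cong) (auto simp: vl_scale assms)
  also have "\<dots> = vl (concat (map (\<lambda>(k,c). scaleL c (g k)) xs))"
    by (simp add: vl_concat o_def case_prod_unfold)
  finally show ?thesis by (simp add: bindL_def vl_norm)
qed

lemma vl_map_sum: "vl (concat (map g ys)) = sum_list (map (\<lambda>y. vl (g y)) ys)"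
  by (simp add: vl_concat o_def)

lemma vl_single: "vl [((M,l),(1,1))] = bv (mset M, latof l)"
  by (simp add: vl_Cons smul_def cv_def)

lemma vl_single_sum: "vl (map (\<lambda>i. ((f i, l), c i)) ys) = sum_list (map (\<lambda>i. smul (cv (c i)) (bv (mset (f i), latof l))) ys)"
  by (induction ys) (simp_all add: vl_Cons)

lemma of_rat_sum_list: "of_rat (\<Sum>x\<leftarrow>xs. f x) = (\<Sum>x\<leftarrow>xs. of_rat (f x))"
  by (induction xs) (simp_all add: of_rat_add)

definition gT :: "ix \<Rightarrow> ix \<Rightarrow> int" where
  "gT i j = [[4,3,5,6,4,2],[3,6,6,9,6,3],[5,6,10,12,8,4],
                      [6,9,12,18,12,6],[4,6,8,12,10,5],[2,3,4,6,5,4]] ! ixn i ! ixn j"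

lemma ginv_gT: "ginv i j = of_int (gT i j) / 3" by (simp add: ginv_def gT_def)

definition lipI :: "lat \<Rightarrow> lat \<Rightarrow> int" where
  "lipI x y = (\<Sum>i\<leftarrow>ixs. \<Sum>j\<leftarrow>ixs. x i * y j * gT i j)"

lemma of_int_sum_list: "of_int (\<Sum>x\<leftarrow>xs. f x) = (\<Sum>x\<leftarrow>xs. of_int (f x))"
  by (induction xs) simp_all

lemma sum_list_div: "(\<Sum>x\<leftarrow>xs. f x / (c::rat)) = (\<Sum>x\<leftarrow>xs. f x) / c"
  by (induction xs) (simp_all add: add_divide_distrib)

lemma lip_I: "lip x y = of_int (lipI x y) / 3"
  by (simp add: lip_def lipI_def sum_UNIV_ix ginv_gT of_int_sum_list sum_list_div o_def)

lemma ip_hofl: "ip (hofl x) (hofl y) = of_int (lipI x y) / 3"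
proof -
  have "ip (hofl x) (hofl y) = of_rat (lip x y)"
    by (simp add: ip_def lip_def hofl_def sum_UNIV_ix of_rat_sum_list of_rat_mult o_def)
  then show ?thesis by (simp add: lip_I of_rat_divide)
qed

definition lipA :: "lv \<Rightarrow> ix \<Rightarrow> int" where
  "lipA a i = (\<Sum>j\<leftarrow>ixs. latof a j * gT j i)"

lemma lipA_eq: "lipI (latof a) (lam i) = lipA a i"
  by (cases i) (simp_all add: lipI_def lipA_def ixs_def lam_def)

definition crI :: "lv \<Rightarrow> nat \<Rightarrow> (ix \<times> nat) list \<Rightarrow> lv \<Rightarrow> ix \<Rightarrow> key \<times> cf" where
  "crI a n M l i = ((insort (i, n - 1) M, l), (latof a i, 1))"

fun crB :: "lv \<Rightarrow> nat \<Rightarrow> key \<Rightarrow> vL" where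
  "crB a n (M,l) = map (crI a n M l) ixs"

definition crL :: "lv \<Rightarrow> nat \<Rightarrow> vL \<Rightarrow> vL" where
  "crL a n = bindL (crB a n)"

lemma cr_vl: "cr (hofl (latof a)) n (vl xs) = vl (crL a n xs)"
  unfolding cr_def crL_def
proof (rule vl_bind)
  fix M l
  have "vl (map (crI a n M l) ys) = sum_list (map (\<lambda>i. smul (of_int (latof a i)) (bv (add_mset (i,n-1) (mset M), latof l))) ys)" for ys
    by (induction ys) (simp_all add: crI_def vl_Cons cv_def)
  then show "(case (mset M, latof l) of (M, beta) \<Rightarrow> \<Sum>i\<in>UNIV. smul (hofl (latof a) i) (bv (M + {#(i, n - 1)#}, beta))) = vl (crB a n (M, l))"
    by (simp add: sum_UNIV_ix hofl_def)
qed

definition anI :: "lv \<Rightarrow> nat \<Rightarrow> (ix \<times> nat) list \<Rightarrow> lv \<Rightarrow> ix \<Rightarrow> key \<times> cf" where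
  "anI a n M l i = ((remove1 (i, n - 1) M, l),
       (int n * lipA a i * int (count_list M (i, n - 1)), 3))"

fun anB :: "lv \<Rightarrow> nat \<Rightarrow> key \<Rightarrow> vL" where
  "anB a n (M,l) = map (anI a n M l) ixs"

definition anL :: "lv \<Rightarrow> nat \<Rightarrow> vL \<Rightarrow> vL" where
  "anL a n = bindL (anB a n)"

lemma an_vl: "an (hofl (latof a)) n (vl xs) = vl (anL a n xs)"
  unfolding an_def anL_def
proof (rule vl_bind)
  fix M l
  have "vl (map (anI a n M l) ys) = sum_list (map (\<lambda>i. smul (of_nat n * (of_int (lipA a i) / 3) * of_nat (count_list M (i, n - 1))) (bv (mset M - {#(i,n-1)#}, latof l))) ys)" for ys
    by (induction ys) (simp_all add: anI_def vl_Cons cv_def)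
  then show "(case (mset M, latof l) of (M, beta) \<Rightarrow> \<Sum>i\<in>UNIV.
      smul (of_nat n * ip (hofl (latof a)) (hofl (lam i)) * of_nat (count M (i, n - 1)))
           (bv (M - {#(i, n - 1)#}, beta))) = vl (anB a n (M, l))"
    by (simp add: sum_UNIV_ix ip_hofl[of "latof a" "lam _", unfolded hofl_def lipA_eq] hofl_def
     count_mset mset_remove1)
qed

fun zmB :: "lv \<Rightarrow> key \<Rightarrow> vL" where
  "zmB a (M,l) = [((M, l), (lipI (latof a) (latof l), 3))]"

definition zmL :: "lv \<Rightarrow> vL \<Rightarrow> vL" where
  "zmL a = bindL (zmB a)"

lemma zm_vl: "zm (hofl (latof a)) (vl xs) = vl (zmL a xs)"
  unfolding zm_def zmL_def
  by (rule vl_bind) (simp add: vl_Cons ip_hofl cv_def)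

definition wtL :: "(ix \<times> nat) list \<Rightarrow> nat" where
  "wtL M = (\<Sum>x\<leftarrow>M. snd x + 1)"

lemma wt_mset: "wt (mset M) = wtL M"
  by (induction M) (simp_all add: wt_def wtL_def)

definition hmL :: "lv \<Rightarrow> int \<Rightarrow> vL \<Rightarrow> vL" where
  "hmL a m = (if m < 0 then crL a (nat (- m)) else if m = 0 then zmL a else anL a (nat m))"

lemma hm_vl: "hm (hofl (latof a)) m (vl xs) = vl (hmL a m xs)"
  by (simp add: hm_def hmL_def cr_vl an_vl zm_vl)

definition sqJ :: "lv \<Rightarrow> int \<Rightarrow> (ix \<times> nat) list \<Rightarrow> lv \<Rightarrow> int \<Rightarrow> vL" where
  "sqJ a m M l j = (let k = m - 1 - j in
         if 0 < j \<and> k < 0 then hmL a k (hmL a j [((M,l),(1,1))])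
         else hmL a j (hmL a k [((M,l),(1,1))]))"

fun sqB :: "lv \<Rightarrow> int \<Rightarrow> key \<Rightarrow> vL" where
  "sqB a m (M,l) = concat (map (sqJ a m M l) [m - 1 - int (wtL M) .. int (wtL M)])"

definition sqL :: "lv \<Rightarrow> int \<Rightarrow> vL \<Rightarrow> vL" where
  "sqL a m = bindL (sqB a m)"

lemma sum_upto: "(\<Sum>j\<in>{a..b::int}. f j) = (\<Sum>j\<leftarrow>[a..b]. f j)"
  by (simp add: sum_list_distinct_conv_sum_set)

lemma sq_vl: "sqmode (hofl (latof a)) m (vl xs) = vl (sqL a m xs)"
  unfolding sqmode_def sqL_def
proof (rule vl_bind)
  fix M l
  show "(case (mset M, latof l) of (M, beta) \<Rightarrow> \<Sum>j = m - 1 - int (wt M)..int (wt M).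
            let k = m - 1 - j in if 0 < j \<and> k < 0 then hm (hofl (latof a)) k (hm (hofl (latof a)) j (bv (M, beta)))
            else hm (hofl (latof a)) j (hm (hofl (latof a)) k (bv (M, beta)))) =
        vl (sqB a m (M, l))"
    by (simp add: sqJ_def wt_mset sum_upto vl_map_sum vl_single[symmetric] hm_vl Let_def if_distrib o_def cong: if_cong)
qed




fun complist :: "nat \<Rightarrow> nat list list" where
  "complist 0 = [[]]"
| "complist (Suc n) = concat (map (\<lambda>k. map ((#) (Suc k)) (complist (n - k))) [0..<Suc n])"

lemma complist_Suc_set: "set (complist (Suc n)) = (\<Union>k\<in>{0..<Suc n}. (#) (Suc k) ` set (complist (n - k)))"
  by (simp only: complist.simps set_concat set_map image_image set_upt)

lemma comps_0: "comps 0 = {[]}"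
proof -
  have "ks = []" if "sum_list ks = 0" "0 \<notin> set ks" for ks :: "nat list"
    using that by (cases ks) auto
  then show ?thesis by (auto simp: comps_def)
qed

lemma comps_Suc: "comps (Suc n) = (\<Union>k\<in>{0..<Suc n}. (#) (Suc k) ` comps (n - k))"
proof (rule set_eqI)
  fix ks
  show "ks \<in> comps (Suc n) \<longleftrightarrow> ks \<in> (\<Union>k\<in>{0..<Suc n}. (#) (Suc k) ` comps (n - k))"
  proof
    assume a: "ks \<in> comps (Suc n)"
    then obtain x ks' where ks: "ks = x # ks'" by (cases ks) (auto simp: comps_def)
    with a obtain k where x: "x = Suc k" by (cases x) (auto simp: comps_def)
    from a ks x have "k < Suc n" "ks' \<in> comps (n - k)" by (auto simp: comps_def)
    then show "ks \<in> (\<Union>k\<in>{0..<Suc n}. (#) (Suc k) ` comps (n - k))" using ks x by auto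
  next
    assume "ks \<in> (\<Union>k\<in>{0..<Suc n}. (#) (Suc k) ` comps (n - k))"
    then obtain k ks' where "k < Suc n" "ks = Suc k # ks'" "ks' \<in> comps (n - k)" by auto
    then show "ks \<in> comps (Suc n)" by (auto simp: comps_def)
  qed
qed

lemma complist_set: "set (complist b) = comps b"
proof (induction b rule: complist.induct)
  case 1 then show ?case by (simp add: comps_0)
next
  case (2 n)
  have ih: "\<And>k. k \<in> {0..<Suc n} \<Longrightarrow> set (complist (n - k)) = comps (n - k)"
    using 2 by (simp only: set_upt)
  have "(\<lambda>k. (#) (Suc k) ` set (complist (n - k))) ` {0..<Suc n} = (\<lambda>k. (#) (Suc k) ` comps (n - k)) ` {0..<Suc n}"
    by (rule image_cong[OF refl]) (simp only: ih)
  then show ?case unfolding complist_Suc_set comps_Suc by (rule arg_cong[where f=Union])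
qed

lemma complist_ne: "complist n \<noteq> []"
proof -
  have "(if n = 0 then [] else [n]) \<in> comps n" by (auto simp: comps_def)
  then have "set (complist n) \<noteq> {}" unfolding complist_set by blast
  then show ?thesis by auto
qed

lemma complist_distinct: "distinct (complist b)"
proof (induction b rule: complist.induct)
  case 1 then show ?case by simp
next
  case (2 n)
  let ?f = "\<lambda>k. map ((#) (Suc k)) (complist (n - k))"
  have inj: "inj_on ?f (set [0..<Suc n])"
  proof (rule inj_onI)
    fix k k' assume e: "?f k = ?f k'"
    obtain y ys where "complist (n - k) = y # ys" using complist_ne[of "n-k"] by (cases "complist (n - k)") auto
    with e show "k = k'" by (cases "complist (n - k')") auto
  qed
  have d1: "distinct (map ?f [0..<Suc n])"
    unfolding distinct_map using inj distinct_upt by blast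
  have d2: "\<forall>ys\<in>set (map ?f [0..<Suc n]). distinct ys"
  proof
    fix ys assume "ys \<in> set (map ?f [0..<Suc n])"
    then obtain k where k: "k \<in> set [0..<Suc n]" "ys = ?f k" by (simp only: set_map) blast
    have "distinct (complist (n - k))" using 2 k(1) .
    then show "distinct ys" unfolding k(2) distinct_map by (simp add: inj_on_def)
  qed
  have d3: "\<forall>ys\<in>set (map ?f [0..<Suc n]). \<forall>zs\<in>set (map ?f [0..<Suc n]). ys \<noteq> zs \<longrightarrow> set ys \<inter> set zs = {}"
  proof (intro ballI impI)
    fix ys zs assume "ys \<in> set (map ?f [0..<Suc n])" "zs \<in> set (map ?f [0..<Suc n])" "ys \<noteq> zs"
    then obtain k k' where "ys = ?f k" "zs = ?f k'" "k \<noteq> k'" by (simp only: set_map) blast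
    then show "set ys \<inter> set zs = {}" by auto
  qed
  show ?case unfolding complist.simps using d1 d2 d3 by (intro distinct_concat) blast+
qed

lemma of_rat_fact: "(of_rat (fact n) :: complex) = fact n"
  by (metis of_nat_fact of_rat_of_nat_eq)

fun appL :: "(nat \<Rightarrow> vL \<Rightarrow> vL) \<Rightarrow> nat list \<Rightarrow> vL \<Rightarrow> vL" where
  "appL x [] v = v"
| "appL x (k # ks) v = scaleL (1, int k) (x k (appL x ks v))"

definition expK :: "(nat \<Rightarrow> vL \<Rightarrow> vL) \<Rightarrow> vL \<Rightarrow> nat list \<Rightarrow> vL" where
  "expK x v ks = scaleL (1, int (fact (length ks))) (appL x ks v)"

definition expcoL :: "(nat \<Rightarrow> vL \<Rightarrow> vL) \<Rightarrow> nat \<Rightarrow> vL \<Rightarrow> vL" where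
  "expcoL x b v = concat (map (expK x v) (complist b))"

lemma expco_vl:
  assumes xx: "\<And>k ys. x k (vl ys) = vl (xL k ys)"
  shows "expco x b (vl xs) = vl (expcoL xL b xs)"
proof -
  have fo: "foldr (\<lambda>k f. (\<lambda>w. smul (1 / of_nat k) (x k w)) \<circ> f) ks id (vl xs)
          = vl (appL xL ks xs)" for ks
    by (induction ks) (simp_all add: vl_scale xx cv_def)
  show ?thesis
    unfolding expco_def expcoL_def expK_def
    by (simp add: complist_set[symmetric] sum_list_distinct_conv_sum_set[symmetric] complist_distinct
          vl_map_sum vl_scale fo cv_def)
qed




definition epsT :: "ix \<Rightarrow> ix \<Rightarrow> int" where
  "epsT i j = [[1,1,1,1,1,1],[-1,1,1,1,1,-1],[-1,1,1,1,1,1],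
                        [1,-1,1,1,1,1],[1,1,1,1,1,-1],[1,1,1,1,1,1]] ! ixn i ! ixn j"

lemma epsT_cases: "epsT i j = 1 \<or> epsT i j = -1"
  by (cases i; cases j) (simp_all add: epsT_def)

lemma m1_powi: "(-1::complex) powi k = (if even k then 1 else -1)"
proof (cases "k \<ge> 0")
  case True
  then obtain n where "k = int n" by (metis nonneg_int_cases)
  then show ?thesis by (simp add: power_int_def)
next
  case False
  then obtain n where "k = - int n" by (metis linorder_not_le neg_int_cases less_imp_le nonpos_int_cases)
  then show ?thesis using power_int_minus_one_minus[of "int n", where 'a=complex]
    by (simp add: power_int_def)
qed

definition epsU :: "lat \<Rightarrow> lat \<Rightarrow> rat" where
  "epsU x y = (\<Prod>i\<leftarrow>ixs. \<Prod>j\<leftarrow>ixs. (if epsT i j = -1 \<and> odd (x i * y j) then -1 else 1))"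

lemma of_rat_prod_list: "of_rat (\<Prod>x\<leftarrow>xs. f x) = (\<Prod>x\<leftarrow>xs. of_rat (f x))"
  by (induction xs) (simp_all add: of_rat_mult)

lemma epsmat_powi: "epsmat i j powi k = of_rat (if epsT i j = -1 \<and> odd k then -1 else 1)"
proof -
  have e: "epsmat i j = of_int (epsT i j)" by (simp add: epsmat_def epsT_def)
  show ?thesis using epsT_cases[of i j]
  proof
    assume "epsT i j = 1" then show ?thesis by (simp add: e)
  next
    assume "epsT i j = -1" then show ?thesis by (simp add: e m1_powi)
  qed
qed

lemma eps_U: "eps x y = of_rat (epsU x y)"
  by (simp add: eps_def epsU_def prod_UNIV_ix epsmat_powi of_rat_prod_list o_def)

definition sg :: "int \<Rightarrow> int" where "sg k = (if odd k then -1 else 1)"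

fun epsV :: "lv \<Rightarrow> lv \<Rightarrow> int" where
  "epsV (V a1 a2 a3 a4 a5 a6) (V b1 b2 b3 b4 b5 b6) = sg (a2*b1) * sg (a2*b6) * sg (a3*b1) * sg (a4*b2) * sg (a5*b6)"

lemma epsU_V: "epsU (latof x) (latof y) = of_int (epsV x y)"
  by (cases x; cases y) (simp add: epsU_def ixs_def epsT_def sg_def)

lemma eps_V: "eps (latof x) (latof y) = of_int (epsV x y)"
  unfolding eps_U epsU_V by simp

lemma floor3: "\<lfloor>(of_int z :: rat) / 3\<rfloor> = z div 3"
  using floor_divide_of_int_eq[of z 3, where 'a=rat] by simp


definition anN :: "lv \<Rightarrow> nat \<Rightarrow> vL \<Rightarrow> vL" where
  "anN a k w = scaleL (-1, 1) (anL a k w)"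

definition emA :: "lv \<Rightarrow> int \<Rightarrow> (ix \<times> nat) list \<Rightarrow> lv \<Rightarrow> nat \<Rightarrow> vL" where
  "emA a n M l aa = (let bb = int aa - n - 1 - lipI (latof a) (latof l) div 3 in
        if bb \<ge> 0 then expcoL (crL a) (nat bb) (expcoL (anN a) aa [((M, addV a l), (1, 1))])
        else [])"

fun emB :: "lv \<Rightarrow> int \<Rightarrow> key \<Rightarrow> vL" where
  "emB a n (M,l) = scaleL (epsV a l, 1) (concat (map (emA a n M l) [0..<Suc (wtL M)]))"

definition emodeL :: "lv \<Rightarrow> int \<Rightarrow> vL \<Rightarrow> vL" where
  "emodeL a n = bindL (emB a n)"

lemma sum_atMost_list: "(\<Sum>aa\<in>{0..m::nat}. f aa) = (\<Sum>aa\<leftarrow>[0..<Suc m]. f aa)"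
  by (subst sum_list_distinct_conv_sum_set) (simp_all only: distinct_upt set_upt atLeastLessThanSuc_atLeastAtMost)

lemma emode_vl: "emode (latof a) n (vl xs) = vl (emodeL a n xs)"
  unfolding emode_def emodeL_def
proof (rule vl_bind)
  fix M l
  have cr1: "\<And>k ys. cr (hofl (latof a)) k (vl ys) = vl (crL a k ys)" by (rule cr_vl)
  have an1: "\<And>k ys. smul (-1) (an (hofl (latof a)) k (vl ys)) = vl (anN a k ys)"
    by (simp add: anN_def vl_scale an_vl cv_def)
  have bv1: "bv (mset M, latof a + latof l) = vl [((M, addV a l), (1, 1))]" by (simp add: vl_single latof_add)
  show "(case (mset M, latof l) of (M, beta) \<Rightarrow>
          smul (eps (latof a) beta)
           (\<Sum>aa = 0..wt M.
               let bb = int aa - n - 1 - \<lfloor>lip (latof a) beta\<rfloor>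
               in if 0 \<le> bb
                  then expco (cr (hofl (latof a))) (nat bb)
                        (expco (\<lambda>k w. smul (- 1) (an (hofl (latof a)) k w)) aa (bv (M, latof a + beta)))
                  else 0)) =
        vl (emB a n (M, l))"
    by (simp del: upt_Suc add: emA_def o_def wt_mset vl_scale eps_V cv_def lip_I floor3 sum_atMost_list vl_map_sum bv1 Let_def if_distrib[where f=vl]
          expco_vl[where x="\<lambda>k w. smul (-1) (an (hofl (latof a)) k w)" and xL="anN a", OF an1]
          expco_vl[where x="cr (hofl (latof a))" and xL="crL a", OF cr1] cong: if_cong)
qed


definition "h1v = V (-1) 0 0 0 0 1"
definition "h2v = V 0 0 1 0 (-1) 0"
definition "h3v = V 1 0 (-1) 0 1 (-1)"
definition "h4v = V (-1) 0 1 0 (-1) 1"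
definition "g1v = V 2 0 (-1) 0 1 (-2)"
definition "g2v = V (-1) 0 2 0 (-2) 1"
definition "g3v = V 1 0 1 0 (-1) (-1)"
definition "ng1v = V (-2) 0 1 0 (-1) 2"
definition "ng2v = V 1 0 (-2) 0 2 (-1)"
definition "ng3v = V (-1) 0 (-1) 0 1 1"
definition "zv = V 0 0 0 0 0 0"

definition UL :: vL where
  "UL = normL (scaleL (1,6) (crL h1v 1 (crL h1v 1 (crL h1v 1 [(([],zv),(1,1))]))
                          @ crL h2v 1 (crL h2v 1 (crL h2v 1 [(([],zv),(1,1))]))
                          @ crL h3v 1 (crL h3v 1 (crL h3v 1 [(([],zv),(1,1))])))
             @ scaleL (1,2) (crL h2v 1 [(([],g1v),(1,1)), (([],ng1v),(1,1))])
             @ scaleL (1,2) (crL h1v 1 [(([],g2v),(1,1)), (([],ng2v),(1,1))])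
             @ scaleL (1,2) (crL h4v 1 [(([],g3v),(1,1)), (([],ng3v),(1,1))]))"



definition omodeL :: "int \<Rightarrow> vL \<Rightarrow> vL" where
  "omodeL n xs = normL (scaleL (1,10) (sqL h1v n xs @ sqL h2v n xs @ sqL h3v n xs)
     @ scaleL (1,5) (scaleL (-1,1) (emodeL g1v n xs @ emodeL ng1v n xs)
                   @ scaleL (-1,1) (emodeL g2v n xs @ emodeL ng2v n xs)
                   @ emodeL g3v n xs @ emodeL ng3v n xs))"





definition ULx :: vL where
  "ULx = [(([(L1,0)], V (-1) 0 (-1) 0 1 1), (-1,2)),
   (([(L1,0)], V (-1) 0 2 0 (-2) 1), (-1,2)),
   (([(L1,0)], V 1 0 (-2) 0 2 (-1)), (-1,2)),
   (([(L1,0)], V 1 0 1 0 (-1) (-1)), (-1,2)),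
   (([(L1,0),(L1,0),(L3,0)], V 0 0 0 0 0 0), (-1,2)),
   (([(L1,0),(L1,0),(L5,0)], V 0 0 0 0 0 0), (1,2)),
   (([(L1,0),(L3,0),(L3,0)], V 0 0 0 0 0 0), (1,2)),
   (([(L1,0),(L3,0),(L5,0)], V 0 0 0 0 0 0), (-1,1)),
   (([(L1,0),(L3,0),(L6,0)], V 0 0 0 0 0 0), (1,1)),
   (([(L1,0),(L5,0),(L5,0)], V 0 0 0 0 0 0), (1,2)),
   (([(L1,0),(L5,0),(L6,0)], V 0 0 0 0 0 0), (-1,1)),
   (([(L3,0)], V (-2) 0 1 0 (-1) 2), (1,2)),
   (([(L3,0)], V (-1) 0 (-1) 0 1 1), (1,2)),
   (([(L3,0)], V 1 0 1 0 (-1) (-1)), (1,2)),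
   (([(L3,0)], V 2 0 (-1) 0 1 (-2)), (1,2)),
   (([(L3,0),(L3,0),(L6,0)], V 0 0 0 0 0 0), (-1,2)),
   (([(L3,0),(L5,0),(L6,0)], V 0 0 0 0 0 0), (1,1)),
   (([(L3,0),(L6,0),(L6,0)], V 0 0 0 0 0 0), (-1,2)),
   (([(L5,0)], V (-2) 0 1 0 (-1) 2), (-1,2)),
   (([(L5,0)], V (-1) 0 (-1) 0 1 1), (-1,2)),
   (([(L5,0)], V 1 0 1 0 (-1) (-1)), (-1,2)),
   (([(L5,0)], V 2 0 (-1) 0 1 (-2)), (-1,2)),
   (([(L5,0),(L5,0),(L6,0)], V 0 0 0 0 0 0), (-1,2)),
   (([(L5,0),(L6,0),(L6,0)], V 0 0 0 0 0 0), (1,2)),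
   (([(L6,0)], V (-1) 0 (-1) 0 1 1), (1,2)),
   (([(L6,0)], V (-1) 0 2 0 (-2) 1), (1,2)),
   (([(L6,0)], V 1 0 (-2) 0 2 (-1)), (1,2)),
   (([(L6,0)], V 1 0 1 0 (-1) (-1)), (1,2))]"

lemma vl_eq_check: "normL (xs @ scaleL (-1,1) ys) = [] \<Longrightarrow> vl xs = vl ys"
proof -
  assume a: "normL (xs @ scaleL (-1,1) ys) = []"
  have "vl xs + smul (-1) (vl ys) = 0"
    using vl_norm[of "xs @ scaleL (-1,1) ys"] a by (simp add: vl_append vl_scale cv_def)
  then show ?thesis by (simp add: fun_eq_iff smul_def)
qed

lemma vl_zero_check: "normL xs = [] \<Longrightarrow> vl xs = 0"
  using vl_norm[of xs] by simp

lemma UL_ULx: "normL (UL @ scaleL (-1,1) ULx) = []" by code_simp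

lemma lat_eqI: "(\<And>i. x i = y i) \<Longrightarrow> x = y" by (rule ext)

lemma h1_eq: "h1 = hofl (latof h1v)"
  unfolding h1_def h1v_def by (rule arg_cong[where f=hofl], rule ext) (simp add: lam_def split: ix.split)
lemma h2_eq: "h2 = hofl (latof h2v)"
  unfolding h2_def h2v_def by (rule arg_cong[where f=hofl], rule ext) (simp add: lam_def split: ix.split)
lemma h3_eq: "h3 = hofl (latof h3v)"
  unfolding h3_def h3v_def by (rule arg_cong[where f=hofl], rule ext) (simp add: lam_def split: ix.split)
lemma h4_eq: "hofl (lam L3 - lam L1 - lam L5 + lam L6) = hofl (latof h4v)"
  unfolding h4v_def by (rule arg_cong[where f=hofl], rule ext) (simp add: lam_def split: ix.split)

lemma alpha_V: "alpha j = latof (V (cartan j L1) (cartan j L2) (cartan j L3) (cartan j L4) (cartan j L5) (cartan j L6))"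
  by (rule ext) (simp add: alpha_def split: ix.split)

lemmas cartan_simps = cartan_def adj_def doubleton_eq_iff

definition "a1v = V 2 0 (-1) 0 0 0"
definition "a2v = V 0 2 0 (-1) 0 0"
definition "a3v = V (-1) 0 2 (-1) 0 0"
definition "a4v = V 0 (-1) (-1) 2 (-1) 0"
definition "a5v = V 0 0 0 (-1) 2 (-1)"
definition "a6v = V 0 0 0 0 (-1) 2"
definition "nthv = V 0 (-1) 0 0 0 0"

lemma a1: "alpha L1 = latof a1v" unfolding alpha_V a1v_def by (simp add: cartan_simps)
lemma a2: "alpha L2 = latof a2v" unfolding alpha_V a2v_def by (simp add: cartan_simps)
lemma a3: "alpha L3 = latof a3v" unfolding alpha_V a3v_def by (simp add: cartan_simps)
lemma a4: "alpha L4 = latof a4v" unfolding alpha_V a4v_def by (simp add: cartan_simps)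
lemma a5: "alpha L5 = latof a5v" unfolding alpha_V a5v_def by (simp add: cartan_simps)
lemma a6: "alpha L6 = latof a6v" unfolding alpha_V a6v_def by (simp add: cartan_simps)

lemma g1: "gamma1 = latof g1v" unfolding gamma1_def a1 a6 a1v_def a6v_def g1v_def
  by (rule ext) (simp split: ix.split)
lemma g2: "gamma2 = latof g2v" unfolding gamma2_def a3 a5 a3v_def a5v_def g2v_def
  by (rule ext) (simp split: ix.split)
lemma g3: "gamma3 = latof g3v" unfolding gamma3_def g1 g2 g1v_def g2v_def g3v_def
  by (rule ext) (simp split: ix.split)
lemma ng1: "- gamma1 = latof ng1v" unfolding g1 g1v_def ng1v_def by (rule ext) (simp split: ix.split)
lemma ng2: "- gamma2 = latof ng2v" unfolding g2 g2v_def ng2v_def by (rule ext) (simp split: ix.split)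
lemma ng3: "- gamma3 = latof ng3v" unfolding g3 g3v_def ng3v_def by (rule ext) (simp split: ix.split)
lemma nth: "- theta = latof nthv"
  unfolding theta_def a1 a2 a3 a4 a5 a6 a1v_def a2v_def a3v_def a4v_def a5v_def a6v_def nthv_def
  by (rule ext) (simp split: ix.split)
lemma z0: "(0::lat) = latof zv" unfolding zv_def by (rule ext) (simp split: ix.split)

lemma omode_vl: "omode n (vl xs) = vl (omodeL n xs)"
  unfolding omode_def omodeL_def ng1 ng2 ng3 unfolding h1_eq h2_eq h3_eq g1 g2 g3 sq_vl emode_vl
    vl_norm vl_append vl_scale
  by (rule ext) (simp add: smul_def cv_def algebra_simps)

lemma Uvec_vl: "Uvec = vl UL"
proof -
  have v0: "vac 0 = vl [(([],zv),(1,1))]" by (simp add: vac_def z0 vl_single)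
  have v1: "vac gamma1 + vac (- gamma1) = vl [(([],g1v),(1,1)), (([],ng1v),(1,1))]"
    unfolding vac_def ng1 unfolding g1 by (simp add: vl_Cons smul_def cv_def)
  have v2: "vac gamma2 + vac (- gamma2) = vl [(([],g2v),(1,1)), (([],ng2v),(1,1))]"
    unfolding vac_def ng2 unfolding g2 by (simp add: vl_Cons smul_def cv_def)
  have v3: "vac gamma3 + vac (- gamma3) = vl [(([],g3v),(1,1)), (([],ng3v),(1,1))]"
    unfolding vac_def ng3 unfolding g3 by (simp add: vl_Cons smul_def cv_def)
  show ?thesis
    unfolding Uvec_def UL_def v0 v1 v2 v3 h1_eq h2_eq h3_eq h4_eq cr_vl vl_norm vl_append vl_scale
    by (simp add: cv_def add.assoc)
qed

lemma Uvec_ULx: "Uvec = vl ULx"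
  using Uvec_vl vl_eq_check[OF UL_ULx] by simp


lemma chk_b1: "normL (emodeL a2v 0 ULx) = []" by code_simp
lemma chk_b2: "normL (emodeL a4v 0 ULx) = []" by code_simp
lemma chk_b3: "normL (emodeL a3v 0 ULx @ emodeL a5v 0 ULx) = []" by code_simp
lemma chk_b4: "normL (emodeL a1v 0 ULx @ emodeL a6v 0 ULx) = []" by code_simp
lemma chk_low: "normL (emodeL nthv 1 ULx) = []" by code_simp
lemma chk_L1: "normL (omodeL 2 ULx) = []" by code_simp
lemma chk_L2: "normL (omodeL 3 ULx) = []" by code_simp
lemma chk_L0: "normL (omodeL 1 ULx @ scaleL (-3,1) ULx) = []" by code_simp
lemma chk_nz: "filter (\<lambda>(k,c). mset (fst k) = mset (fst ([(L1,0)], V (-1) 0 (-1) 0 1 1)) \<and> snd k = snd ([(L1,0)], V (-1) 0 (-1) 0 1 1)) ULx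
   = [(([(L1,0)], V (-1) 0 (-1) 0 1 1), (-1,2))]"
  by code_simp
lemma chk_supp: "list_all (\<lambda>x. snd (fst x) \<in> set [zv, g1v, ng1v, g2v, ng2v, g3v, ng3v]) ULx" by code_simp

section \<open>Root lattice and projection\<close>

lemma root_of: "latof v = (\<lambda>i. \<Sum>j\<in>UNIV. latof c j * alpha j i) \<Longrightarrow> latof v \<in> rootlat"
  unfolding rootlat_def by blast

lemma rl_all: "\<forall>v \<in> set [zv, g1v, ng1v, g2v, ng2v, g3v, ng3v]. latof v \<in> rootlat"
proof -
  have "latof zv \<in> rootlat"
    by (rule root_of[where c=zv]) (rule ext, simp add: sum_UNIV_ix ixs_def alpha_def cartan_simps zv_def split: ix.split)
  moreover have "latof g1v \<in> rootlat"
    by (rule root_of[where c="V 1 0 0 0 0 (-1)"]) (rule ext, simp add: sum_UNIV_ix ixs_def alpha_def cartan_simps g1v_def split: ix.split)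
  moreover have "latof ng1v \<in> rootlat"
    by (rule root_of[where c="V (-1) 0 0 0 0 1"]) (rule ext, simp add: sum_UNIV_ix ixs_def alpha_def cartan_simps ng1v_def split: ix.split)
  moreover have "latof g2v \<in> rootlat"
    by (rule root_of[where c="V 0 0 1 0 (-1) 0"]) (rule ext, simp add: sum_UNIV_ix ixs_def alpha_def cartan_simps g2v_def split: ix.split)
  moreover have "latof ng2v \<in> rootlat"
    by (rule root_of[where c="V 0 0 (-1) 0 1 0"]) (rule ext, simp add: sum_UNIV_ix ixs_def alpha_def cartan_simps ng2v_def split: ix.split)
  moreover have "latof g3v \<in> rootlat"
    by (rule root_of[where c="V 1 0 1 0 (-1) (-1)"]) (rule ext, simp add: sum_UNIV_ix ixs_def alpha_def cartan_simps g3v_def split: ix.split)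
  moreover have "latof ng3v \<in> rootlat"
    by (rule root_of[where c="V (-1) 0 (-1) 0 1 1"]) (rule ext, simp add: sum_UNIV_ix ixs_def alpha_def cartan_simps ng3v_def split: ix.split)
  ultimately show ?thesis by simp
qed

lemma proj_all: "\<forall>v \<in> set [zv, g1v, ng1v, g2v, ng2v, g3v, ng3v]. Proj (latof v) = 0"
  by (simp add: zv_def g1v_def ng1v_def g2v_def ng2v_def g3v_def ng3v_def Proj_def tau_def fun_eq_iff split: ix.split)

theorem lemma6p4:
  shows "Uvec \<noteq> 0
    \<and> (\<forall>b. Uvec b \<noteq> 0 \<longrightarrow> snd b \<in> rootlat)
    \<and> lowtheta Uvec = 0
    \<and> beta1 Uvec = 0 \<and> beta2 Uvec = 0 \<and> beta3 Uvec = 0 \<and> beta4 Uvec = 0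
    \<and> Lvir 1 Uvec = 0 \<and> Lvir 2 Uvec = 0
    \<and> Lvir 0 Uvec = smul 3 Uvec
    \<and> (\<forall>b. Uvec b \<noteq> 0 \<longrightarrow> Proj (snd b) = 0)"
proof -
  have U: "Uvec = vl ULx" by (rule Uvec_ULx)
  have supp: "snd b \<in> latof ` set [zv, g1v, ng1v, g2v, ng2v, g3v, ng3v]" if "Uvec b \<noteq> 0" for b
  proof -
    from that have "b \<in> kb ` fst ` set ULx" unfolding U by (rule vl_supp)
    then obtain k where k: "k \<in> fst ` set ULx" "b = kb k" by blast
    obtain M l where kM: "k = (M, l)" by fastforce
    have "snd k \<in> set [zv, g1v, ng1v, g2v, ng2v, g3v, ng3v]"
      using chk_supp k(1) unfolding list_all_iff by auto
    moreover have "snd b = latof (snd k)" using k(2) kM by simp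
    ultimately show ?thesis by (metis image_eqI)
  qed
  have nz: "Uvec \<noteq> 0"
  proof
    assume "Uvec = 0"
    then have "Uvec (kb ([(L1,0)], V (-1) 0 (-1) 0 1 1)) = 0" by simp
    then show False unfolding U vl_at[OF chk_nz] by (simp add: cv_def)
  qed
  have root: "\<forall>b. Uvec b \<noteq> 0 \<longrightarrow> snd b \<in> rootlat"
    using supp rl_all by fastforce
  have proj: "\<forall>b. Uvec b \<noteq> 0 \<longrightarrow> Proj (snd b) = 0"
    using supp proj_all by fastforce
  have low: "lowtheta Uvec = 0"
    unfolding lowtheta_def U nth emode_vl by (rule vl_zero_check[OF chk_low])
  have b1: "beta1 Uvec = 0"
    unfolding beta1_def U a2 emode_vl by (rule vl_zero_check[OF chk_b1])
  have b2: "beta2 Uvec = 0"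
    unfolding beta2_def U a4 emode_vl by (rule vl_zero_check[OF chk_b2])
  have b3: "beta3 Uvec = 0"
    unfolding beta3_def U a3 a5 emode_vl vl_append[symmetric] by (rule vl_zero_check[OF chk_b3])
  have b4: "beta4 Uvec = 0"
    unfolding beta4_def U a1 a6 emode_vl vl_append[symmetric] by (rule vl_zero_check[OF chk_b4])
  have l1: "Lvir 1 Uvec = 0"
    unfolding Lvir_def U using omode_vl[of 2 ULx] vl_zero_check[OF chk_L1] by simp
  have l2: "Lvir 2 Uvec = 0"
    unfolding Lvir_def U using omode_vl[of 3 ULx] vl_zero_check[OF chk_L2] by simp
  have l0: "Lvir 0 Uvec = smul 3 Uvec"
  proof -
    have "vl (omodeL 1 ULx) + smul (-3) (vl ULx) = 0"
      using vl_zero_check[OF chk_L0] by (simp add: vl_append vl_scale cv_def)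
    then have "vl (omodeL 1 ULx) = smul 3 (vl ULx)"
      by (simp add: fun_eq_iff smul_def)
    then show ?thesis unfolding Lvir_def U using omode_vl[of 1 ULx] by simp
  qed
  show ?thesis using nz root low b1 b2 b3 b4 l1 l2 l0 proj by blast
qed

end
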